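(* For every integer $n \geq 1$, $\psi_{2}(2,n) = \chi(n)$, where $\psi_2(2,n)$ is the number of primitive two-dimensional words of dimension $2\times n$ over the binary alphabet $\{0,1\}$ and $\chi(n)=|\mathcal{T}_n|$ is the number of (similarity classes of) triangles having exact pedal period $n$.
   Context: A two-dimensional word of dimension $m\times n$ over an alphabet $\Sigma$ is a map $W:\{0,\dots,m-1\}\times\{0,\dots,n-1\}\to\Sigma$. For $W$ of dimension $m\times n$ and integers $p,q\ge1$, the power $W^{p\times q}$ is the word of dimension $pm\times qn$ with $W^{p\times q}[i,j]=W[i \bmod m, j\bmod n]$. A two-dimensional word is periodic if it equals $V^{p\times q}$ for some nonempty two-dimensional word $V$ with $p\ge2$ or $q\ge2$; otherwise it is primitive. $\psi_2(m,n)$ denotes the number of primitive two-dimensional words of dimension $m\times n$ over $\{0,1\}$. Triangles are represented up to similarity by sorted normalized angle triples: $\overline{C}=\{(a,b,c)\in\mathbb{R}^3 : a\ge b\ge c\ge 0,\ a+b+c=1\}$, $C=\{(a,b,c)\in\mathbb{R}^3: a\ge b\ge c>0,\ a+b+c=1\}$ (angles $a\pi,b\pi,c\pi$), and $C^*=\{(a,b,c)\in C: a\neq 1/2\}$. Partition $C^*$ into $R_0=\{a<1/2\}$, $R_1=\{2a-1\ge 2b,\ a>1/2\}$, $R_2=\{2b>2a-1\ge 2c,\ a>1/2\}$, $R_3=\{2c>2a-1,\ a>1/2\}$ (all within $C^*$). The sorted pedal map $P:C^*\to C$ is $P(a,b,c)=(1-2c,1-2b,1-2a)$ on $R_0$,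 $(2a-1,2b,2c)$ on $R_1$, $(2b,2a-1,2c)$ on $R_2$, $(2b,2c,2a-1)$ on $R_3$ (this is the angle map sending a triangle to its pedal/orthic triangle, followed by sorting). For $n\ge1$, $\mathcal{T}_n=\{p\in C : P^j(p)\text{ is defined for all }0\le j<n,\ P^n(p)=p,\ P^d(p)\ne p \text{ for all }1\le d<n\}$, the set of triangles of exact pedal period $n$, and $\chi(n)=|\mathcal{T}_n|$. *)

theory Defs
  imports Complex_Main
begin

text \<open>A two-dimensional word of dimension m x n over alphabet S is represented as an
extensional map on {0..<m} x {0..<n} (value undefined outside the domain).\<close>

definition words2 :: "nat \<Rightarrow> nat \<Rightarrow> 'a set \<Rightarrow> (nat \<times> nat \<Rightarrow> 'a) set" where
  "words2 m n S = {W. (\<forall>i j. i < m \<and> j < n \<longrightarrow> W (i, j) \<in> S) \<and>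
                      (\<forall>i j. \<not> (i < m \<and> j < n) \<longrightarrow> W (i, j) = undefined)}"

definition power2 :: "(nat \<times> nat \<Rightarrow> 'a) \<Rightarrow> nat \<Rightarrow> nat \<Rightarrow> nat \<Rightarrow> nat \<Rightarrow> (nat \<times> nat \<Rightarrow> 'a)" where
  "power2 V a b p q = (\<lambda>(i, j). if i < p * a \<and> j < q * b then V (i mod a, j mod b) else undefined)"

definition periodic2 :: "nat \<Rightarrow> nat \<Rightarrow> 'a set \<Rightarrow> (nat \<times> nat \<Rightarrow> 'a) \<Rightarrow> bool" where
  "periodic2 m n S W \<longleftrightarrow> (\<exists>a b p q V. a \<ge> 1 \<and> b \<ge> 1 \<and> p \<ge> 1 \<and> q \<ge> 1 \<and> (p \<ge> 2 \<or> q \<ge> 2) \<and>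
       p * a = m \<and> q * b = n \<and> V \<in> words2 a b S \<and> W = power2 V a b p q)"

definition psi2 :: "nat \<Rightarrow> nat \<Rightarrow> nat" where
  "psi2 m n = card {W \<in> words2 m n {0::nat, 1}. \<not> periodic2 m n {0, 1} W}"

definition Ctri :: "(real \<times> real \<times> real) set" where
  "Ctri = {(a, b, c). a \<ge> b \<and> b \<ge> c \<and> c > 0 \<and> a + b + c = 1}"

definition Cstar :: "(real \<times> real \<times> real) set" where
  "Cstar = {(a, b, c). (a, b, c) \<in> Ctri \<and> a \<noteq> 1/2}"

text \<open>Sorted pedal map; only meaningful on Cstar (the region conditions follow the paper).\<close>
definition pedal :: "real \<times> real \<times> real \<Rightarrow> real \<times> real \<times> real" where
  "pedal = (\<lambda>(a, b, c).
     if a < 1/2 then (1 - 2*c, 1 - 2*b, 1 - 2*a)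
     else if 2*a - 1 \<ge> 2*b then (2*a - 1, 2*b, 2*c)
     else if 2*a - 1 \<ge> 2*c then (2*b, 2*a - 1, 2*c)
     else (2*b, 2*c, 2*a - 1))"

definition Tper :: "nat \<Rightarrow> (real \<times> real \<times> real) set" where
  "Tper n = {p \<in> Ctri. (\<forall>j < n. (pedal ^^ j) p \<in> Cstar) \<and> (pedal ^^ n) p = p \<and>
                       (\<forall>d. 1 \<le> d \<and> d < n \<longrightarrow> (pedal ^^ d) p \<noteq> p)}"

definition chi :: "nat \<Rightarrow> nat" where
  "chi n = card (Tper n)"

end

theory Submission
  imports Defs "HOL-Analysis.Analysis"
begin


definition Cbar :: "(real \<times> real \<times> real) set" where
  "Cbar = {x. fst x \<ge> fst (snd x) \<and> fst (snd x) \<ge> snd (snd x) \<and> snd (snd x) \<ge> 0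
            \<and> fst x + fst (snd x) + snd (snd x) = 1}"

lemma Cbar_iff[simp]: "((a,b,c) \<in> Cbar) = (a \<ge> b \<and> b \<ge> c \<and> c \<ge> 0 \<and> a + b + c = 1)"
  by (simp add: Cbar_def)

lemma Ctri_iff[simp]: "((a,b,c) \<in> Ctri) = (a \<ge> b \<and> b \<ge> c \<and> c > 0 \<and> a + b + c = 1)"
  by (simp add: Ctri_def)

lemma Cstar_iff[simp]: "((a,b,c) \<in> Cstar) = (a \<ge> b \<and> b \<ge> c \<and> c > 0 \<and> a + b + c = 1 \<and> a \<noteq> 1/2)"
  by (simp add: Cstar_def)

definition gbr :: "nat \<Rightarrow> real \<times> real \<times> real \<Rightarrow> real \<times> real \<times> real" where
  "gbr r = (\<lambda>(a,b,c). if r = 0 then ((1-c)/2, (1-b)/2, (1-a)/2)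
     else if r = 1 then ((1+a)/2, b/2, c/2)
     else if r = 2 then ((1+b)/2, a/2, c/2)
     else ((1+c)/2, a/2, b/2))"

definition reg :: "real \<times> real \<times> real \<Rightarrow> nat" where
  "reg = (\<lambda>(a,b,c). if a < 1/2 then 0 else if 2*a - 1 \<ge> 2*b then 1
     else if 2*a - 1 \<ge> 2*c then 2 else 3)"

lemma pedal_simp: "pedal (a,b,c) = (if a < 1/2 then (1 - 2*c, 1 - 2*b, 1 - 2*a)
     else if 2*a - 1 \<ge> 2*b then (2*a - 1, 2*b, 2*c)
     else if 2*a - 1 \<ge> 2*c then (2*b, 2*a - 1, 2*c)
     else (2*b, 2*c, 2*a - 1))"
  by (simp add: pedal_def)

lemma reg_simp: "reg (a,b,c) = (if a < 1/2 then 0 else if 2*a - 1 \<ge> 2*b then 1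
     else if 2*a - 1 \<ge> 2*c then 2 else 3)"
  by (simp add: reg_def)

lemma gbr_simp: "gbr r (a,b,c) = (if r = 0 then ((1-c)/2, (1-b)/2, (1-a)/2)
     else if r = 1 then ((1+a)/2, b/2, c/2)
     else if r = 2 then ((1+b)/2, a/2, c/2)
     else ((1+c)/2, a/2, b/2))"
  by (simp add: gbr_def)

lemma reg_lt4: "reg x < 4"
  by (cases x) (auto simp: reg_simp)

lemma gbr_Cbar: "y \<in> Cbar \<Longrightarrow> gbr r y \<in> Cbar"
  by (cases y) (auto simp: gbr_simp field_simps)

lemma gbr_inv:
  assumes "(a',b',c') \<in> Cbar" "c' > 0" "r < 4" "r = 2 \<longrightarrow> a' > b'" "r = 3 \<longrightarrow> b' > c'"
  shows "gbr r (a',b',c') \<in> Cstar \<and> reg (gbr r (a',b',c')) = r \<and> pedal (gbr r (a',b',c')) = (a',b',c')"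
proof -
  have "r = 0 \<or> r = 1 \<or> r = 2 \<or> r = 3" using assms(3) by auto
  then show ?thesis using assms(1,2,4,5)
    by (elim disjE) (auto simp: gbr_simp reg_simp pedal_simp field_simps)
qed

definition D3 :: "real \<times> real \<times> real \<Rightarrow> real \<times> real \<times> real \<Rightarrow> real" where
  "D3 x y = \<bar>fst x - fst y\<bar> + \<bar>fst (snd x) - fst (snd y)\<bar> + \<bar>snd (snd x) - snd (snd y)\<bar>"

lemma abs2: "\<bar>2*x - 2*y\<bar> = 2*\<bar>x-y\<bar>" for x y :: real
  by (simp add: abs_if)

lemma D3_double: "reg x = reg y \<Longrightarrow> D3 (pedal x) (pedal y) = 2 * D3 x y"
  by (cases x; cases y) (auto simp: reg_simp pedal_simp D3_def abs2 abs_minus_commute split: if_splits)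

lemma D3_zero: "D3 x y = 0 \<Longrightarrow> x = y"
  by (cases x; cases y) (auto simp: D3_def)



lemma forever: fixes Q :: "nat \<Rightarrow> bool" shows "(\<And>k. Q k \<Longrightarrow> Q (Suc k)) \<Longrightarrow> Q j \<Longrightarrow> Q (j + m)"
  by (induction m) auto

lemma per_mult: fixes f :: "nat \<Rightarrow> 'a" assumes "\<And>k. f (k+n) = f k" shows "f (k + m*n) = f k"
proof (induction m)
  case (Suc m)
  have "f (k + Suc m * n) = f ((k + m*n) + n)" by (simp add: algebra_simps)
  also have "\<dots> = f (k + m*n)" by (rule assms)
  finally show ?case using Suc by simp
qed simp

lemma allk:
  assumes "n \<ge> (1::nat)" "\<And>k. Q (k+n) = Q k" "\<And>k. Q k \<Longrightarrow> Q (Suc k)" "Q j"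
  shows "Q k"
proof -
  have "j * 1 \<le> j * n" using assms(1) by (rule mult_le_mono2)
  then have "j \<le> k + j*n" by linarith
  then have e: "k + j*n = j + (k + j*n - j)" by simp
  have "Q (j + (k + j*n - j))" by (rule forever[OF assms(3) assms(4)])
  then have "Q (k + j*n)" using e by simp
  moreover have "Q (k + j*n) = Q k" by (rule per_mult[of Q n], rule assms(2))
  ultimately show ?thesis by simp
qed

lemma valid_orbit:
  fixes q :: "nat \<Rightarrow> real \<times> real \<times> real" and s :: "nat \<Rightarrow> nat"
  assumes n: "n \<ge> 1" and s4: "\<And>k. s k < 4" and sper: "\<And>k. s (k+n) = s k"
    and qper: "\<And>k. q (k+n) = q k"
    and qC: "\<And>k. q k \<in> Cbar" and rel: "\<And>k. q k = gbr (s k) (q (Suc k))"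
    and ex: "s j = 0 \<or> s j = 3"
  shows "snd (snd (q k)) > 0 \<and> (s k = 2 \<longrightarrow> fst (q (Suc k)) > fst (snd (q (Suc k))))
     \<and> (s k = 3 \<longrightarrow> fst (snd (q (Suc k))) > snd (snd (q (Suc k))))"
proof -
  define A where "A k = fst (q k)" for k
  define B where "B k = fst (snd (q k))" for k
  define C where "C k = snd (snd (q k))" for k
  have qeq: "q k = (A k, B k, C k)" for k by (simp add: A_def B_def C_def)
  have R: "A k \<ge> B k \<and> B k \<ge> C k \<and> C k \<ge> 0 \<and> A k + B k + C k = 1" for k
    using qC[of k] by (simp add: qeq)
  have E: "(s k = 0 \<and> A k = (1 - C (Suc k))/2 \<and> B k = (1 - B (Suc k))/2 \<and> C k = (1 - A (Suc k))/2)
     \<or> (s k = 1 \<and> A k = (1 + A (Suc k))/2 \<and> B k = B (Suc k)/2 \<and> C k = C (Suc k)/2)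
     \<or> (s k = 2 \<and> A k = (1 + B (Suc k))/2 \<and> B k = A (Suc k)/2 \<and> C k = C (Suc k)/2)
     \<or> (s k = 3 \<and> A k = (1 + C (Suc k))/2 \<and> B k = A (Suc k)/2 \<and> C k = B (Suc k)/2)" for k
  proof -
    have "q k = gbr (s k) (A (Suc k), B (Suc k), C (Suc k))" using rel[of k] by (simp add: qeq)
    then have "(A k, B k, C k) = gbr (s k) (A (Suc k), B (Suc k), C (Suc k))" by (simp add: qeq)
    then show ?thesis using s4[of k] by (auto simp: gbr_simp split: if_splits)
  qed
  have Aper: "A (k+n) = A k" and Bper: "B (k+n) = B k" and Cper: "C (k+n) = C k" for k
    by (simp_all add: A_def B_def C_def qper)
  have sjn: "s (Suc j + (n - 1)) = s j" using sper[of j] n by simp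
  have cpos: "C k > 0" for k
  proof (rule ccontr)
    assume "\<not> C k > 0"
    then have ck: "C k = 0" using R[of k] by linarith
    have step: "C i = 0 \<Longrightarrow> C (Suc i) = 0" for i
      using E[of i] R[of i] R[of "Suc i"] by auto
    have allC: "C i = 0" for i
      by (rule allk[of n "\<lambda>i. C i = 0", OF n _ step ck]) (simp add: Cper)
    have a1: "A (Suc j) = 1" using ex E[of j] allC[of j] R[of "Suc j"] by auto
    have stepA: "A i = 1 \<Longrightarrow> A (Suc i) = 1 \<and> s i = 1" for i
      using E[of i] R[of i] R[of "Suc i"] by auto
    have "A (Suc j + m) = 1 \<and> s (Suc j + m) = 1" for m
    proof (induction m)
      case 0 then show ?case using a1 stepA[of "Suc j"] by simp
    next
      case (Suc m) then show ?case using stepA[of "Suc j + m"] stepA[of "Suc (Suc j + m)"] by simp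
    qed
    then have "s j = 1" using sjn by metis
    then show False using ex by simp
  qed
  define iso where "iso i = (A i = B i \<or> B i = C i)" for i
  have isoper: "iso (i+n) = iso i" for i by (simp add: iso_def Aper Bper Cper)
  have ab0: "A i = B i \<Longrightarrow> s i = 0 \<and> B (Suc i) = C (Suc i)" for i
    using E[of i] R[of i] R[of "Suc i"] cpos[of "Suc i"] by auto
  have bc: "B i = C i \<Longrightarrow> (s i = 1 \<and> B (Suc i) = C (Suc i)) \<or> (s i = 2 \<and> A (Suc i) = C (Suc i))
      \<or> (s i = 0 \<and> A (Suc i) = B (Suc i)) \<or> (s i = 3 \<and> A (Suc i) = B (Suc i))" for i
    using E[of i] R[of i] R[of "Suc i"] by auto
  have isostep: "iso i \<Longrightarrow> iso (Suc i)" for i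
    unfolding iso_def using ab0[of i] bc[of i] R[of "Suc i"] by auto
  have eqstep: "A i = B i \<and> B i = C i \<Longrightarrow> s i = 0 \<and> A (Suc i) = B (Suc i) \<and> B (Suc i) = C (Suc i)" for i
    using E[of i] R[of i] R[of "Suc i"] cpos[of "Suc i"] by auto
  have noeq: False if i0: "(s i = 2 \<and> A (Suc i) = B (Suc i)) \<or> (s i = 3 \<and> B (Suc i) = C (Suc i))" for i
  proof -
    have i: "s i = 2 \<or> s i = 3" using i0 by auto
    have iso1: "iso (Suc i)" using i0 iso_def by auto
    have isoi: "iso i"
      by (rule allk[of n iso, OF n isoper isostep iso1])
    have "A i \<noteq> B i" using ab0[of i] i by auto
    then have "B i = C i" using isoi iso_def by auto
    then have eq1: "A (Suc i) = B (Suc i) \<and> B (Suc i) = C (Suc i)"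
      using bc[of i] i0 R[of "Suc i"] by auto
    have "(A (Suc i + m) = B (Suc i + m) \<and> B (Suc i + m) = C (Suc i + m)) \<and> s (Suc i + m) = 0" for m
    proof (induction m)
      case 0 then show ?case using eq1 eqstep[of "Suc i"] by simp
    next
      case (Suc m) then show ?case using eqstep[of "Suc i + m"] eqstep[of "Suc (Suc i + m)"] by simp
    qed
    moreover have "s (Suc i + (n - 1)) = s i" using sper[of i] n by simp
    ultimately have "s i = 0" by metis
    then show False using i by simp
  qed
  have "s k = 2 \<longrightarrow> A (Suc k) > B (Suc k)"
    using noeq[of k] R[of "Suc k"] unfolding iso_def by force
  moreover have "s k = 3 \<longrightarrow> B (Suc k) > C (Suc k)"
    using noeq[of k] R[of "Suc k"] unfolding iso_def by force
  ultimately show ?thesis using cpos[of k] by (simp add: A_def B_def C_def)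
qed



fun ch :: "(nat \<Rightarrow> nat) \<Rightarrow> nat \<Rightarrow> nat \<Rightarrow> real \<times> real \<times> real \<Rightarrow> real \<times> real \<times> real" where
  "ch s 0 k = id"
| "ch s (Suc m) k = gbr (s k) \<circ> ch s m (Suc k)"

lemma gbr_cont: "continuous_on S (gbr r)"
proof -
  have "gbr r = (\<lambda>x. if r = 0 then ((1 - snd (snd x))/2, (1 - fst (snd x))/2, (1 - fst x)/2)
     else if r = 1 then ((1 + fst x)/2, fst (snd x)/2, snd (snd x)/2)
     else if r = 2 then ((1 + fst (snd x))/2, fst x/2, snd (snd x)/2)
     else ((1 + snd (snd x))/2, fst x/2, fst (snd x)/2))"
    by (auto simp: gbr_def split_def)
  then show ?thesis
    by (cases "r = 0"; cases "r = 1"; cases "r = 2") (simp_all add: continuous_intros)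
qed

lemma ch_cont: "continuous_on S (ch s m k)"
proof (induction m arbitrary: k S)
  case 0 then show ?case by (simp add: continuous_on_id)
next
  case (Suc m)
  show ?case
    unfolding ch.simps by (intro continuous_on_compose Suc.IH gbr_cont)
qed

lemma ch_Cbar: "x \<in> Cbar \<Longrightarrow> ch s m k x \<in> Cbar"
  by (induction m arbitrary: k) (auto simp: gbr_Cbar)

lemma Cbar_closed: "closed Cbar"
  unfolding Cbar_def
  by (intro closed_Collect_conj closed_Collect_le closed_Collect_eq continuous_intros)

lemma Cbar_bounded: "bounded Cbar"
proof -
  have "Cbar \<subseteq> {0..1} \<times> ({0..1} \<times> {0..1})"
    by (auto simp: Cbar_def)
  moreover have "bounded ({0..1::real} \<times> ({0..1::real} \<times> {0..1::real}))"
    by (intro bounded_Times bounded_closed_interval)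
  ultimately show ?thesis by (rule bounded_subset[rotated])
qed

lemma Cbar_compact: "compact Cbar"
  using Cbar_closed Cbar_bounded compact_eq_bounded_closed by blast

lemma Cbar_convex: "convex Cbar"
proof (unfold convex_def, intro ballI allI impI)
  fix x y :: "real \<times> real \<times> real" and t1 t2 :: real
  assume x: "x \<in> Cbar" and y: "y \<in> Cbar" and uv: "0 \<le> t1" "0 \<le> t2" "t1 + t2 = 1"
  obtain a b c where xe: "x = (a,b,c)" by (cases x)
  obtain a' b' c' where ye: "y = (a',b',c')" by (cases y)
  have h: "a \<ge> b" "b \<ge> c" "c \<ge> 0" "a+b+c = 1" "a' \<ge> b'" "b' \<ge> c'" "c' \<ge> 0" "a'+b'+c' = 1"
    using x y by (auto simp: xe ye)
  have "t1 * b + t2 * b' \<le> t1 * a + t2 * a'" using h uv by (intro add_mono mult_left_mono) auto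
  moreover have "t1 * c + t2 * c' \<le> t1 * b + t2 * b'" using h uv by (intro add_mono mult_left_mono) auto
  moreover have "0 \<le> t1 * c + t2 * c'" using h uv by simp
  moreover have "(t1 * a + t2 * a') + (t1 * b + t2 * b') + (t1 * c + t2 * c') = 1"
  proof -
    have "(t1 * a + t2 * a') + (t1 * b + t2 * b') + (t1 * c + t2 * c') = t1 * (a + b + c) + t2 * (a' + b' + c')"
      by (simp add: algebra_simps)
    then show ?thesis using h uv by simp
  qed
  ultimately show "t1 *\<^sub>R x + t2 *\<^sub>R y \<in> Cbar" by (simp add: xe ye)
qed

lemma s_mod: fixes s :: "nat \<Rightarrow> 'a" assumes "\<And>k. s (k+n) = s k" shows "s k = s (k mod n)"
proof -
  have "s (k mod n + (k div n) * n) = s (k mod n)" by (rule per_mult, rule assms)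
  then show ?thesis by (simp add: mod_div_mult_eq)
qed

lemma exists_orbit:
  fixes s :: "nat \<Rightarrow> nat"
  assumes n: "n \<ge> 1" and s4: "\<And>k. s k < 4" and sper: "\<And>k. s (k+n) = s k"
    and ex: "s j = 0 \<or> s j = 3"
  shows "\<exists>p \<in> Ctri. (\<forall>k. (pedal ^^ k) p \<in> Cstar \<and> reg ((pedal ^^ k) p) = s k) \<and> (pedal ^^ n) p = p"
proof -
  have "(1,0,0) \<in> Cbar" by simp
  then have "Cbar \<noteq> {}" by blast
  moreover have "ch s n 0 \<in> Cbar \<rightarrow> Cbar" using ch_Cbar by auto
  ultimately obtain p where pC: "p \<in> Cbar" and pfix: "ch s n 0 p = p"
    using brouwer[OF Cbar_compact Cbar_convex _ ch_cont] by metis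
  define q where "q k = ch s (n - k mod n) (k mod n) p" for k
  have qper: "q (k+n) = q k" for k by (simp add: q_def)
  have qC: "q k \<in> Cbar" for k by (simp add: q_def ch_Cbar pC)
  have rel: "q k = gbr (s k) (q (Suc k))" for k
  proof -
    have sk: "s k = s (k mod n)" by (rule s_mod, rule sper)
    have r: "k mod n < n" using n by simp
    show ?thesis
    proof (cases "Suc (k mod n) < n")
      case True
      then have m: "Suc k mod n = Suc (k mod n)" by (simp add: mod_Suc)
      have "n - k mod n = Suc (n - Suc (k mod n))" using True by simp
      then show ?thesis using m sk by (simp add: q_def)
    next
      case False
      then have e: "Suc (k mod n) = n" using r by simp
      then have m: "Suc k mod n = 0" by (simp add: mod_Suc)
      have "n - k mod n = Suc 0" using e by simp
      then show ?thesis using m sk pfix by (simp add: q_def)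
    qed
  qed
  have q0: "q 0 = p" using pfix by (simp add: q_def)
  have V: "snd (snd (q k)) > 0 \<and> (s k = 2 \<longrightarrow> fst (q (Suc k)) > fst (snd (q (Suc k))))
     \<and> (s k = 3 \<longrightarrow> fst (snd (q (Suc k))) > snd (snd (q (Suc k))))" for k
    by (rule valid_orbit[OF n s4 sper qper qC rel ex])
  have good: "q k \<in> Cstar \<and> reg (q k) = s k \<and> pedal (q k) = q (Suc k)" for k
  proof -
    obtain a b c where e: "q (Suc k) = (a,b,c)" by (cases "q (Suc k)")
    have "gbr (s k) (a,b,c) \<in> Cstar \<and> reg (gbr (s k) (a,b,c)) = s k \<and> pedal (gbr (s k) (a,b,c)) = (a,b,c)"
      using qC[of "Suc k"] V[of k] V[of "Suc k"] s4[of k] by (intro gbr_inv) (simp_all add: e)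
    then show ?thesis using rel[of k] e by simp
  qed
  have it: "(pedal ^^ k) p = q k" for k
    by (induction k) (simp_all add: q0 good)
  have "p \<in> Ctri" using good[of 0] q0 by (cases p) simp
  moreover have "(pedal ^^ n) p = p" using it[of n] qper[of 0] q0 by simp
  ultimately show ?thesis using it good by metis
qed



definition enc :: "nat \<Rightarrow> nat \<Rightarrow> nat" where
  "enc r i = (if i = 0 then (if r = 2 \<or> r = 3 then 1 else 0) else (if r = 0 \<or> r = 2 then 1 else 0))"

definition dec :: "nat \<Rightarrow> nat \<Rightarrow> nat" where
  "dec x y = (if x = 0 then (if y = 1 then 0 else 1) else (if y = 1 then 2 else 3))"

lemma dec_enc: "r < 4 \<Longrightarrow> dec (enc r 0) (enc r 1) = r"
  by (auto simp: dec_def enc_def)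

lemma enc_dec: "x \<in> {0,1} \<Longrightarrow> y \<in> {0,1} \<Longrightarrow> enc (dec x y) 0 = x \<and> enc (dec x y) (Suc 0) = y"
  by (auto simp: dec_def enc_def)

lemma enc01: "enc r i \<in> {0,1}"
  by (auto simp: enc_def)

lemma enc_diag: "r < 4 \<Longrightarrow> enc r 0 = enc r 1 \<Longrightarrow> r = 1 \<or> r = 2"
  by (auto simp: enc_def split: if_splits)

lemma dec_offdiag: "x \<in> {0,1} \<Longrightarrow> y \<in> {0,1} \<Longrightarrow> x \<noteq> y \<Longrightarrow> dec x y = 0 \<or> dec x y = 3"
  by (auto simp: dec_def)

lemma enc_inj: "r < 4 \<Longrightarrow> r' < 4 \<Longrightarrow> enc r 0 = enc r' 0 \<Longrightarrow> enc r 1 = enc r' 1 \<Longrightarrow> r = r'"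
  by (metis dec_enc)

lemma orbit_per:
  assumes "(pedal ^^ n) p = p"
  shows "(pedal ^^ (k + n)) p = (pedal ^^ k) p"
  by (simp add: funpow_add assms)

lemma orbit_mod:
  assumes "(pedal ^^ n) p = p"
  shows "(pedal ^^ k) p = (pedal ^^ (k mod n)) p"
  by (rule s_mod[of "\<lambda>k. (pedal ^^ k) p"], rule orbit_per, rule assms)

lemma orbit_Cstar:
  assumes n: "n \<ge> 1" and "(pedal ^^ n) p = p" and "\<forall>j<n. (pedal ^^ j) p \<in> Cstar"
  shows "(pedal ^^ k) p \<in> Cstar"
  using orbit_mod[OF assms(2), of k] assms(3) n by simp

lemma D3_iter:
  assumes "\<forall>k<m. reg ((pedal ^^ k) x) = reg ((pedal ^^ k) y)"
  shows "D3 ((pedal ^^ m) x) ((pedal ^^ m) y) = 2 ^ m * D3 x y"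
  using assms
proof (induction m)
  case (Suc m)
  then have "D3 ((pedal ^^ m) x) ((pedal ^^ m) y) = 2 ^ m * D3 x y" by simp
  moreover have "reg ((pedal ^^ m) x) = reg ((pedal ^^ m) y)" using Suc.prems by simp
  ultimately show ?case using D3_double by simp
qed simp

lemma D3_nonneg: "D3 x y \<ge> 0"
  by (simp add: D3_def)

lemma uniq:
  assumes n: "n \<ge> 1" and r: "\<forall>k<n. reg ((pedal ^^ k) x) = reg ((pedal ^^ k) y)"
    and "(pedal ^^ n) x = x" "(pedal ^^ n) y = y"
  shows "x = y"
proof -
  have e: "D3 x y = 2 ^ n * D3 x y" using D3_iter[OF r] assms(3,4) by simp
  have g: "(2::real) ^ n > 1" using n by (intro one_less_power) auto
  have "(2 ^ n - 1) * D3 x y = 0" using e by (simp add: algebra_simps)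
  then have "D3 x y = 0" using g by simp
  then show ?thesis by (rule D3_zero)
qed

lemma c_double: "reg x = 1 \<or> reg x = 2 \<Longrightarrow> snd (snd (pedal x)) = 2 * snd (snd x)"
  by (cases x) (auto simp: reg_simp pedal_simp split: if_splits)

lemma rows_impossible:
  assumes n: "n \<ge> 1" and p: "p \<in> Ctri" and r: "\<forall>j<n. reg ((pedal ^^ j) p) = 1 \<or> reg ((pedal ^^ j) p) = 2"
    and f: "(pedal ^^ n) p = p"
  shows False
proof -
  have "m \<le> n \<Longrightarrow> snd (snd ((pedal ^^ m) p)) = 2 ^ m * snd (snd p)" for m
  proof (induction m)
    case (Suc m)
    then show ?case using c_double[of "(pedal ^^ m) p"] r by simp
  qed simp
  from this[of n] f have e: "snd (snd p) = 2 ^ n * snd (snd p)" by simp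
  have pos: "snd (snd p) > 0" using p by (cases p) simp
  have g: "(2::real) ^ n > 1" using n by (intro one_less_power) auto
  have "(2 ^ n - 1) * snd (snd p) = 0" using e by (simp add: algebra_simps)
  then show False using g pos by simp
qed

lemma words2_finite: "finite S \<Longrightarrow> finite (words2 m n S)"
proof -
  assume S: "finite S"
  have "words2 m n S \<subseteq> PiE ({0..<m} \<times> {0..<n}) (\<lambda>_. S)"
    by (auto simp: words2_def PiE_def extensional_def Pi_def)
  moreover have "finite (PiE ({0..<m} \<times> {0..<n}) (\<lambda>_. S))"
    using S by (intro finite_PiE) auto
  ultimately show ?thesis by (rule finite_subset)
qed

lemma periodic2_cases:
  assumes "periodic2 2 n S W"
  shows "(\<forall>j<n. W (0,j) = W (1,j)) \<or>
         (\<exists>b. 1 \<le> b \<and> b < n \<and> b dvd n \<and> (\<forall>i<2. \<forall>j<n. W (i,j) = W (i, j mod b)))"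
proof -
  obtain a b p q V where h: "a \<ge> 1" "b \<ge> 1" "p \<ge> 1" "q \<ge> 1" "p \<ge> 2 \<or> q \<ge> 2"
     "p * a = 2" "q * b = n" "V \<in> words2 a b S" "W = power2 V a b p q"
    using assms unfolding periodic2_def by blast
  have "p = 2 \<and> a = 1 \<or> p = 1 \<and> a = 2"
  proof -
    have "p dvd 2" using h(6) by (metis dvd_triv_left)
    then have "p \<le> 2" by (rule dvd_imp_le) simp
    then have "p = 1 \<or> p = 2" using h(3) by auto
    then show ?thesis using h(6) by auto
  qed
  then show ?thesis
  proof
    assume "p = 2 \<and> a = 1"
    then have "\<forall>j<n. W (0,j) = W (1,j)" using h(7,9) by (simp add: power2_def)
    then show ?thesis by simp
  next
    assume pa: "p = 1 \<and> a = 2"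
    then have q2: "q \<ge> 2" using h(5) by simp
    have bn: "b < n"
    proof -
      have "2 * b \<le> q * b" using q2 by (rule mult_le_mono1)
      then show ?thesis using h(2,7) by linarith
    qed
    have bd: "b dvd n" using h(7) by (metis dvd_triv_right)
    have "\<forall>i<2. \<forall>j<n. W (i,j) = W (i, j mod b)"
    proof (intro allI impI)
      fix i j assume "i < (2::nat)" "j < n"
      moreover have "j mod b < n" using \<open>j < n\<close> by (meson le_less_trans mod_less_eq_dividend)
      ultimately show "W (i,j) = W (i, j mod b)" using pa h(7,9) by (simp add: power2_def)
    qed
    then show ?thesis using bn bd h(2) by blast
  qed
qed

lemma periodic_rows:
  assumes n: "n \<ge> 1" and W: "W \<in> words2 2 n S" and r: "\<forall>j<n. W (0,j) = W (1,j)"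
  shows "periodic2 2 n S W"
proof -
  define V where "V = (\<lambda>(i::nat,j). if i < 1 \<and> j < n then W (0,j) else undefined)"
  have V: "V \<in> words2 1 n S" using W by (auto simp: V_def words2_def)
  have "W = power2 V 1 n 2 1"
  proof (rule ext, clarify)
    fix i j
    show "W (i,j) = power2 V 1 n 2 1 (i,j)"
    proof (cases "i < 2 \<and> j < n")
      case True
      then have "i = 0 \<or> i = 1" by auto
      then show ?thesis using True r by (auto simp: power2_def V_def)
    next
      case False
      then show ?thesis using W by (auto simp: power2_def words2_def)
    qed
  qed
  then show ?thesis unfolding periodic2_def using n V
    by (intro exI[of _ 1] exI[of _ n] exI[of _ 2] exI[of _ 1] exI[of _ V]) auto
qed

lemma periodic_col:
  assumes W: "W \<in> words2 2 n S" and b: "1 \<le> b" "b < n" "b dvd n"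
    and r: "\<forall>i<2. \<forall>j<n. W (i,j) = W (i, j mod b)"
  shows "periodic2 2 n S W"
proof -
  define V where "V = (\<lambda>(i::nat,j). if i < 2 \<and> j < b then W (i,j) else undefined)"
  have V: "V \<in> words2 2 b S" using W b by (auto simp: V_def words2_def)
  obtain q where q: "n = b * q" using b(3) by blast
  have q2: "q \<ge> 2"
  proof (rule ccontr)
    assume "\<not> q \<ge> 2"
    then have "q = 0 \<or> q = 1" by auto
    then show False using q b by auto
  qed
  have "W = power2 V 2 b 1 q"
  proof (rule ext, clarify)
    fix i j
    show "W (i,j) = power2 V 2 b 1 q (i,j)"
    proof (cases "i < 2 \<and> j < n")
      case True
      moreover have "j mod b < b" using b by simp
      ultimately show ?thesis using r q by (auto simp: power2_def V_def mult.commute)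
    next
      case False
      then show ?thesis using W q by (auto simp: power2_def words2_def mult.commute)
    qed
  qed
  then show ?thesis unfolding periodic2_def using q q2 V b
    by (intro exI[of _ 2] exI[of _ b] exI[of _ 1] exI[of _ q] exI[of _ V]) (auto simp: mult.commute)
qed



lemma gcd_period:
  fixes s :: "nat \<Rightarrow> 'a"
  assumes d: "d \<ge> 1" and sd: "\<And>k. s (k + d) = s k" and sn: "\<And>k. s (k + n) = s k"
  shows "s (k + gcd d n) = s k"
proof -
  obtain x y where xy: "d * x = n * y + gcd d n" using bezout_nat[of d n] d by auto
  have "s (k + gcd d n) = s (k + gcd d n + y * n)" by (rule per_mult[symmetric], rule sn)
  also have "k + gcd d n + y * n = k + x * d" using xy by (simp add: algebra_simps)
  also have "s (k + x * d) = s k" by (rule per_mult, rule sd)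
  finally show ?thesis .
qed

definition phi :: "nat \<Rightarrow> real \<times> real \<times> real \<Rightarrow> nat \<times> nat \<Rightarrow> nat" where
  "phi n p = (\<lambda>(i,j). if i < 2 \<and> j < n then enc (reg ((pedal ^^ j) p)) i else undefined)"

lemma phi_app: "i < 2 \<Longrightarrow> j < n \<Longrightarrow> phi n p (i,j) = enc (reg ((pedal ^^ j) p)) i"
  by (simp add: phi_def)

lemma Tper_D:
  assumes "p \<in> Tper n"
  shows "p \<in> Ctri" "\<forall>j<n. (pedal ^^ j) p \<in> Cstar" "(pedal ^^ n) p = p"
    "\<And>d. 1 \<le> d \<Longrightarrow> d < n \<Longrightarrow> (pedal ^^ d) p \<noteq> p"
  using assms by (auto simp: Tper_def)

lemma phi_words: "phi n p \<in> words2 2 n {0,1}"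
  using enc01 by (auto simp: words2_def phi_def)

lemma phi_inj:
  assumes n: "n \<ge> 1" shows "inj_on (phi n) (Tper n)"
proof (rule inj_onI)
  fix p p' assume p: "p \<in> Tper n" and p': "p' \<in> Tper n" and e: "phi n p = phi n p'"
  have "\<forall>k<n. reg ((pedal ^^ k) p) = reg ((pedal ^^ k) p')"
  proof (intro allI impI)
    fix k assume k: "k < n"
    have "phi n p (0,k) = phi n p' (0,k)" "phi n p (1,k) = phi n p' (1,k)" using e by simp_all
    then have "enc (reg ((pedal ^^ k) p)) 0 = enc (reg ((pedal ^^ k) p')) 0"
       "enc (reg ((pedal ^^ k) p)) 1 = enc (reg ((pedal ^^ k) p')) 1"
      using k phi_app[of 0 k n p] phi_app[of 1 k n p] phi_app[of 0 k n p'] phi_app[of 1 k n p'] by simp_all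
    then show "reg ((pedal ^^ k) p) = reg ((pedal ^^ k) p')"
      by (rule enc_inj[OF reg_lt4 reg_lt4])
  qed
  then show "p = p'" using uniq[OF n] Tper_D(3)[OF p] Tper_D(3)[OF p'] by blast
qed

lemma phi_into:
  assumes n: "n \<ge> 1" and p: "p \<in> Tper n"
  shows "\<not> periodic2 2 n {0,1} (phi n p)"
proof
  assume "periodic2 2 n {0,1} (phi n p)"
  then consider (rows) "\<forall>j<n. phi n p (0,j) = phi n p (1,j)"
    | (col) b where "1 \<le> b" "b < n" "b dvd n" "\<forall>i<2. \<forall>j<n. phi n p (i,j) = phi n p (i, j mod b)"
    using periodic2_cases by blast
  then show False
  proof cases
    case rows
    have "\<forall>j<n. reg ((pedal ^^ j) p) = 1 \<or> reg ((pedal ^^ j) p) = 2"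
    proof (intro allI impI)
      fix j assume j: "j < n"
      have "phi n p (0,j) = phi n p (1,j)" using rows j by blast
      then have "enc (reg ((pedal ^^ j) p)) 0 = enc (reg ((pedal ^^ j) p)) 1"
        using phi_app[of 0 j n p] phi_app[of 1 j n p] j by simp
      then show "reg ((pedal ^^ j) p) = 1 \<or> reg ((pedal ^^ j) p) = 2"
        by (rule enc_diag[OF reg_lt4])
    qed
    then show False using rows_impossible[OF n Tper_D(1)[OF p] _ Tper_D(3)[OF p]] by blast
  next
    case col
    define t where "t k = reg ((pedal ^^ k) p)" for k
    have pfix: "(pedal ^^ n) p = p" using Tper_D(3)[OF p] .
    have tmod: "t k = t (k mod n)" for k unfolding t_def using orbit_mod[OF pfix] by metis
    have tb: "t j = t (j mod b)" if "j < n" for j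
    proof -
      have jb: "j mod b < n" using that by (meson le_less_trans mod_less_eq_dividend)
      have "phi n p (0,j) = phi n p (0, j mod b)" "phi n p (1,j) = phi n p (1, j mod b)"
        using col(4)[rule_format, of 0 j] col(4)[rule_format, of 1 j] that by simp_all
      then have "enc (reg ((pedal ^^ j) p)) 0 = enc (reg ((pedal ^^ (j mod b)) p)) 0"
        "enc (reg ((pedal ^^ j) p)) 1 = enc (reg ((pedal ^^ (j mod b)) p)) 1"
        using that jb phi_app[of 0 j n p] phi_app[of 1 j n p] phi_app[of 0 "j mod b" n p]
          phi_app[of 1 "j mod b" n p] by simp_all
      then show ?thesis unfolding t_def
        by (rule enc_inj[OF reg_lt4 reg_lt4])
    qed
    have tshift: "t (k + b) = t k" for k
    proof -
      have "t (k + b) = t ((k + b) mod n)" by (rule tmod)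
      also have "\<dots> = t ((k + b) mod n mod b)" using n by (intro tb) simp
      also have "(k + b) mod n mod b = k mod b" using col(3) by (simp add: mod_mod_cancel)
      also have "k mod b = k mod n mod b" using col(3) by (simp add: mod_mod_cancel)
      also have "t (k mod n mod b) = t (k mod n)" using n by (intro tb[symmetric]) simp
      also have "\<dots> = t k" by (rule tmod[symmetric])
      finally show ?thesis .
    qed
    define y where "y = (pedal ^^ b) p"
    have yfix: "(pedal ^^ n) y = y"
      unfolding y_def by (metis pfix funpow_add add.commute comp_apply)
    have "\<forall>k<n. reg ((pedal ^^ k) p) = reg ((pedal ^^ k) y)"
    proof (intro allI impI)
      fix k
      have "(pedal ^^ k) y = (pedal ^^ (k + b)) p" unfolding y_def by (simp add: funpow_add)
      then show "reg ((pedal ^^ k) p) = reg ((pedal ^^ k) y)" using tshift[of k] by (simp add: t_def)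
    qed
    then have "p = y" using uniq[OF n] pfix yfix by blast
    then show False using Tper_D(4)[OF p col(1) col(2)] y_def by simp
  qed
qed

lemma phi_onto:
  assumes n: "n \<ge> 1" and W: "W \<in> words2 2 n {0,1}" and np: "\<not> periodic2 2 n {0,1} W"
  shows "\<exists>p \<in> Tper n. phi n p = W"
proof -
  have W01: "W (i,j) \<in> {0,1}" if "i < 2" "j < n" for i j using W that by (auto simp: words2_def)
  define s where "s k = dec (W (0, k mod n)) (W (1, k mod n))" for k
  have s4: "s k < 4" for k by (simp add: s_def dec_def)
  have sper: "s (k + n) = s k" for k by (simp add: s_def)
  have encs: "enc (s j) i = W (i,j)" if "i < 2" "j < n" for i j
  proof -
    have "i = 0 \<or> i = 1" using that by auto
    then show ?thesis using enc_dec[OF W01[of 0 j] W01[of 1 j]] that by (auto simp: s_def)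
  qed
  obtain j where j: "j < n" "W (0,j) \<noteq> W (1,j)"
    using periodic_rows[OF n W] np by blast
  have ex: "s j = 0 \<or> s j = 3"
    using dec_offdiag[OF W01[of 0 j] W01[of 1 j]] j by (simp add: s_def)
  obtain p where pC: "p \<in> Ctri" and orb: "\<forall>k. (pedal ^^ k) p \<in> Cstar \<and> reg ((pedal ^^ k) p) = s k"
    and pfix: "(pedal ^^ n) p = p"
    using exists_orbit[OF n s4 sper ex] by blast
  have phiW: "phi n p = W"
  proof (rule ext, clarify)
    fix i j
    show "phi n p (i,j) = W (i,j)"
    proof (cases "i < 2 \<and> j < n")
      case True then show ?thesis using orb encs by (simp add: phi_app)
    next
      case False then show ?thesis using W by (auto simp: phi_def words2_def)
    qed
  qed
  have exact: "(pedal ^^ d) p \<noteq> p" if d: "1 \<le> d" "d < n" for d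
  proof
    assume pd: "(pedal ^^ d) p = p"
    have sd: "s (k + d) = s k" for k
    proof -
      have "(pedal ^^ (k + d)) p = (pedal ^^ k) p" by (simp add: funpow_add pd)
      then show ?thesis using orb by metis
    qed
    define g where "g = gcd d n"
    have sg: "s (k + g) = s k" for k unfolding g_def by (rule gcd_period[OF d(1) sd sper])
    have g1: "g \<ge> 1" using d by (simp add: g_def Suc_le_eq)
    have gn: "g < n" using d by (metis g_def gcd_le1_nat le_less_trans not_one_le_zero)
    have gd: "g dvd n" by (simp add: g_def)
    have "\<forall>i<2. \<forall>j<n. W (i,j) = W (i, j mod g)"
    proof (intro allI impI)
      fix i j assume i: "i < (2::nat)" and jn: "j < n"
      have jg: "j mod g < n" using jn by (meson le_less_trans mod_less_eq_dividend)
      have "s j = s (j mod g)" by (rule s_mod, rule sg)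
      then show "W (i,j) = W (i, j mod g)" using encs[OF i jn] encs[OF i jg] by simp
    qed
    then show False using periodic_col[OF W g1 gn gd] np by blast
  qed
  have "p \<in> Tper n" unfolding Tper_def using pC orb pfix exact by auto
  then show ?thesis using phiW by blast
qed

theorem mainTheorem1:
  fixes n :: nat
  assumes "n \<ge> 1"
  shows "finite (Tper n) \<and> psi2 2 n = chi n"
proof -
  let ?W = "{W \<in> words2 2 n {0::nat, 1}. \<not> periodic2 2 n {0, 1} W}"
  have bij: "bij_betw (phi n) (Tper n) ?W"
    unfolding bij_betw_def
  proof
    show "inj_on (phi n) (Tper n)" by (rule phi_inj[OF assms])
    show "phi n ` Tper n = ?W"
    proof
      show "phi n ` Tper n \<subseteq> ?W" using phi_words phi_into[OF assms] by auto
      show "?W \<subseteq> phi n ` Tper n" using phi_onto[OF assms] by blast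
    qed
  qed
  have fin: "finite ?W" using words2_finite[of "{0::nat,1}" 2 n] by (auto intro: finite_subset)
  have "finite (Tper n)" using bij_betw_finite[OF bij] fin by simp
  moreover have "card (Tper n) = card ?W" by (rule bij_betw_same_card[OF bij])
  ultimately show ?thesis by (simp add: psi2_def chi_def)
qed


end
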